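(* The following hold in $VSPG_n$, with all indices distinct elements of $\{1,\dots,n\}$: (i) If $\max\{i,j\}<\max\{k,l\}$, then $\alpha^{\beta}=\alpha^{\beta^{-1}}=\alpha$ for $\alpha\in\{\mu_{kl},\gamma_{kl}\}$, $\beta\in\{\mu_{ij},\gamma_{ij}\}$. In (ii)–(v) assume $k>\max\{i,j\}$. (ii) $\mu_{ik}^{\mu_{ij}}=\mu_{kj}^{\mu_{ij}}\mu_{ik}\mu_{kj}^{-1}$; $\mu_{ik}^{\mu_{ij}^{-1}}=\mu_{kj}^{-1}\mu_{ik}\mu_{kj}^{\mu_{ij}^{-1}}$; $\mu_{ik}^{\gamma_{ij}}=\gamma_{jk}^{-\gamma_{ij}}\mu_{kj}^{-\gamma_{ij}}\gamma_{kj}^{\gamma_{ij}}\mu_{ik}\mu_{jk}$; $\mu_{ik}^{\bar\gamma_{ij}}=\mu_{jk}\mu_{ik}\gamma_{jk}^{-\bar\gamma_{ij}}\mu_{kj}^{-\bar\gamma_{ij}}\gamma_{kj}^{\bar\gamma_{ij}}$; $\gamma_{ik}^{\mu_{ij}}=\mu_{kj}^{\mu_{ij}}\gamma_{ik}\mu_{kj}^{-1}$; $\gamma_{ik}^{\mu_{ij}^{-1}}=\mu_{kj}^{-1}\gamma_{ik}\mu_{kj}^{\mu_{ij}^{-1}}$. (iii) $\mu_{ki}^{\mu_{ij}}=\mu_{kj}\mu_{ki}\mu_{kj}^{-\mu_{ij}}$; $\mu_{ki}^{\mu_{ij}^{-1}}=\mu_{kj}^{-\mu_{ij}^{-1}}\mu_{ki}\mu_{kj}$;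 $\mu_{ki}^{\gamma_{ij}}=\mu_{kj}\mu_{ki}\mu_{kj}^{-\gamma_{ij}}$; $\mu_{ki}^{\bar\gamma_{ij}}=\mu_{kj}^{-\bar\gamma_{ij}}\mu_{ki}\mu_{kj}$; $\gamma_{ki}^{\mu_{ij}}=\mu_{kj}\gamma_{ki}\mu_{kj}^{-\mu_{ij}}$; $\gamma_{ki}^{\mu_{ij}^{-1}}=\mu_{kj}^{-\mu_{ij}^{-1}}\gamma_{ki}\mu_{kj}$. (iv) $\mu_{jk}^{\mu_{ij}}=\mu_{ik}\mu_{jk}\mu_{kj}\mu_{ik}^{-1}\mu_{kj}^{-\mu_{ij}}$; $\mu_{jk}^{\mu_{ij}^{-1}}=\mu_{kj}^{-\mu_{ij}^{-1}}\mu_{ik}^{-1}\mu_{kj}\mu_{jk}\mu_{ik}$; $\mu_{jk}^{\gamma_{ij}}=\gamma_{jk}^{\gamma_{ij}}\mu_{kj}^{\gamma_{ij}}\gamma_{kj}^{-\gamma_{ij}}$; $\mu_{jk}^{\bar\gamma_{ij}}=\gamma_{jk}^{\bar\gamma_{ij}}\mu_{kj}^{\bar\gamma_{ij}}\gamma_{kj}^{-\bar\gamma_{ij}}$; $\gamma_{jk}^{\mu_{ij}}=\mu_{ik}\gamma_{jk}\mu_{kj}\mu_{ik}^{-1}\mu_{kj}^{-\mu_{ij}}$; $\gamma_{jk}^{\mu_{ij}^{-1}}=\mu_{kj}^{-\mu_{ij}^{-1}}\mu_{ik}^{-1}\mu_{kj}\gamma_{jk}\mu_{ik}$. (v) $\gamma_{kj}^{\mu_{ij}}=\mu_{kj}^{\mu_{ij}}\mu_{ik}\mu_{kj}^{-1}\gamma_{kj}\mu_{ik}^{-1}$;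 $\gamma_{kj}^{\mu_{ij}^{-1}}=\mu_{ik}^{-1}\gamma_{kj}\mu_{kj}^{-1}\mu_{ik}\mu_{kj}^{\mu_{ij}^{-1}}$.
   Context: $VSPG_n$ is the group generated by $\{\mu_{ij},\gamma_{ij}\mid 1\le i\ne j\le n\}$ with defining relations (distinct letters denote distinct indices): $\mu_{ij}\mu_{ik}\mu_{jk}=\mu_{jk}\mu_{ik}\mu_{ij}$; $\mu_{ij}\mu_{ik}\gamma_{jk}=\gamma_{jk}\mu_{ik}\mu_{ij}$; $\gamma_{ij}\mu_{ik}\mu_{jk}=\mu_{jk}\mu_{ik}\gamma_{ij}$; $\mu_{ij}\gamma_{ji}=\gamma_{ij}\mu_{ji}$; $\mu_{ij}\mu_{kl}=\mu_{kl}\mu_{ij}$, $\gamma_{ij}\gamma_{kl}=\gamma_{kl}\gamma_{ij}$, $\mu_{ij}\gamma_{kl}=\gamma_{kl}\mu_{ij}$. (It is the kernel of the permutation homomorphism on the virtual singular braid group $VSG_n$, and $\mu_{ij},\gamma_{ij}$ are the generalized fusing strings.) Notation: $\bar\gamma_{ij}:=\gamma_{ij}^{-1}$; $a^b:=b^{-1}ab$; $a^{-b}:=(a^{-1})^b$. *)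

theory Defs
  imports Main
begin

datatype gen = M nat nat | G nat nat

text \<open>Words in the free group: letters are (sign, generator), True = positive exponent.\<close>
type_synonym word = "(bool \<times> gen) list"

definition idx :: "nat \<Rightarrow> nat \<Rightarrow> bool" where
  "idx n i \<longleftrightarrow> 1 \<le> i \<and> i \<le> n"

definition mu :: "nat \<Rightarrow> nat \<Rightarrow> word" where "mu i j = [(True, M i j)]"
definition ga :: "nat \<Rightarrow> nat \<Rightarrow> word" where "ga i j = [(True, G i j)]"

definition iw :: "word \<Rightarrow> word" where
  "iw w = rev (map (\<lambda>(b, x). (\<not> b, x)) w)"

definition cj :: "word \<Rightarrow> word \<Rightarrow> word" where
  "cj a b = iw b @ a @ b"

inductive veq :: "nat \<Rightarrow> word \<Rightarrow> word \<Rightarrow> bool" for n where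
  refl: "veq n u u"
| sym: "veq n u v \<Longrightarrow> veq n v u"
| trans: "veq n u v \<Longrightarrow> veq n v w \<Longrightarrow> veq n u w"
| cong: "veq n u v \<Longrightarrow> veq n (a @ u @ b) (a @ v @ b)"
| cancel: "veq n [(b, x), (\<not> b, x)] []"
| r1: "idx n i \<Longrightarrow> idx n j \<Longrightarrow> idx n k \<Longrightarrow> distinct [i, j, k] \<Longrightarrow>
     veq n (mu i j @ mu i k @ mu j k) (mu j k @ mu i k @ mu i j)"
| r2: "idx n i \<Longrightarrow> idx n j \<Longrightarrow> idx n k \<Longrightarrow> distinct [i, j, k] \<Longrightarrow>
     veq n (mu i j @ mu i k @ ga j k) (ga j k @ mu i k @ mu i j)"
| r3: "idx n i \<Longrightarrow> idx n j \<Longrightarrow> idx n k \<Longrightarrow> distinct [i, j, k] \<Longrightarrow>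
     veq n (ga i j @ mu i k @ mu j k) (mu j k @ mu i k @ ga i j)"
| r4: "idx n i \<Longrightarrow> idx n j \<Longrightarrow> i \<noteq> j \<Longrightarrow>
     veq n (mu i j @ ga j i) (ga i j @ mu j i)"
| r5: "idx n i \<Longrightarrow> idx n j \<Longrightarrow> idx n k \<Longrightarrow> idx n l \<Longrightarrow> distinct [i, j, k, l] \<Longrightarrow>
     veq n (mu i j @ mu k l) (mu k l @ mu i j)"
| r6: "idx n i \<Longrightarrow> idx n j \<Longrightarrow> idx n k \<Longrightarrow> idx n l \<Longrightarrow> distinct [i, j, k, l] \<Longrightarrow>
     veq n (ga i j @ ga k l) (ga k l @ ga i j)"
| r7: "idx n i \<Longrightarrow> idx n j \<Longrightarrow> idx n k \<Longrightarrow> idx n l \<Longrightarrow> distinct [i, j, k, l] \<Longrightarrow>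
     veq n (mu i j @ ga k l) (ga k l @ mu i j)"

end

theory Submission
  imports Defs
begin

lemma veq_app: "veq n u u' \<Longrightarrow> veq n v v' \<Longrightarrow> veq n (u @ v) (u' @ v')"
proof -
  assume a: "veq n u u'" and b: "veq n v v'"
  have "veq n ([] @ u @ v) ([] @ u' @ v)" by (rule veq.cong[OF a])
  moreover have "veq n (u' @ v @ []) (u' @ v' @ [])" by (rule veq.cong[OF b])
  ultimately show ?thesis by (auto intro: veq.trans)
qed

fun red :: "word \<Rightarrow> word" where
  "red [] = []"
| "red (c # w) = (case red w of [] \<Rightarrow> [c]
      | d # w' \<Rightarrow> (if d = (\<not> fst c, snd c) then w' else c # d # w'))"

lemma veq_red: "veq n w (red w)"
proof (induction w)
  case Nil then show ?case by (simp add: veq.refl)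
  case (Cons c w)
  have 1: "veq n (c # w) (c # red w)"
    using veq_app[OF veq.refl[of n "[c]"] Cons.IH] by simp
  show ?case
  proof (cases "red w")
    case Nil then show ?thesis using 1 by simp
  next
    case (Cons d w')
    show ?thesis
    proof (cases "d = (\<not> fst c, snd c)")
      case True
      obtain b x where c: "c = (b, x)" by (cases c)
      have "veq n ([(b,x),(\<not>b,x)] @ w') ([] @ w')"
        using veq_app[OF veq.cancel veq.refl] by blast
      then have "veq n (c # d # w') w'" using True c by simp
      then show ?thesis using 1 Cons True by (auto intro: veq.trans)
    next
      case False then show ?thesis using 1 Cons by simp
    qed
  qed
qed

lemma step: "veq n L R \<Longrightarrow> red (p @ L @ q) = red x \<Longrightarrow> red (p @ R @ q) = red y \<Longrightarrow> veq n x y"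
proof -
  assume r: "veq n L R" and a: "red (p @ L @ q) = red x" and b: "red (p @ R @ q) = red y"
  have "veq n (p @ L @ q) (p @ R @ q)" by (rule veq.cong[OF r])
  moreover have "veq n x (p @ L @ q)" using veq_red[of n x] veq_red[of n "p @ L @ q"] a
    by (metis veq.sym veq.trans)
  moreover have "veq n (p @ R @ q) y" using veq_red[of n y] veq_red[of n "p @ R @ q"] b
    by (metis veq.sym veq.trans)
  ultimately show ?thesis by (meson veq.trans)
qed

lemmas D = mu_def ga_def iw_def cj_def

lemma iw_iw[simp]: "iw (iw w) = w" by (induction w) (auto simp: iw_def)
lemma iw_Cons: "iw (c # w) = iw w @ [(\<not> fst c, snd c)]" by (cases c) (simp add: iw_def)

lemma flipc: "veq n ((\<not> fst c, snd c) # c # u) u"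
proof -
  obtain b x where c: "c = (b, x)" by (cases c)
  have "veq n ([] @ [(\<not>b,x),(\<not>\<not>b,x)] @ u) ([] @ [] @ u)" by (rule veq.cong[OF veq.cancel])
  then show ?thesis using c by simp
qed

lemma inv1: "veq n (iw w @ w @ v) v"
proof (induction w arbitrary: v)
  case Nil then show ?case by (simp add: iw_def veq.refl)
next
  case (Cons c w)
  have "veq n (iw w @ ((\<not> fst c, snd c) # c # w @ v) @ []) (iw w @ (w @ v) @ [])"
    by (rule veq.cong[OF flipc])
  then show ?case using Cons.IH[of v] by (auto simp: iw_Cons intro: veq.trans)
qed

lemma inv2: "veq n (w @ iw w @ v) v" using inv1[of n "iw w" v] by simp

lemma commute: assumes "veq n (b @ a) (a @ b)"
  shows "veq n (cj a b) a \<and> veq n (cj a (iw b)) a"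
proof
  have "veq n (iw b @ (b @ a) @ []) (iw b @ (a @ b) @ [])" by (rule veq.cong[OF assms])
  then have "veq n (iw b @ a @ b) (iw b @ b @ a)" by (simp add: veq.sym)
  then show "veq n (cj a b) a" using inv1[of n b a] by (auto simp: cj_def intro: veq.trans)
next
  have 1: "veq n ([] @ (b @ a) @ iw b) ([] @ (a @ b) @ iw b)" by (rule veq.cong[OF assms])
  have 2: "veq n (a @ (b @ iw b @ []) @ []) (a @ [] @ [])" by (rule veq.cong[OF inv2])
  show "veq n (cj a (iw b)) a" using 1 2 by (auto simp: cj_def intro: veq.trans)
qed
lemma ii1: assumes A: "idx n i" "idx n j" "idx n k" "i \<noteq> j" "i \<noteq> k" "j \<noteq> k"
  shows "veq n (cj (mu i k) (mu i j)) (cj (mu k j) (mu i j) @ mu i k @ iw (mu k j))"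
  by (rule step[OF veq.r1[of n i k j], where p="iw (mu i j)" and q="iw (mu k j)"]) (use A in \<open>simp_all add: D\<close>)

lemma ii2: assumes A: "idx n i" "idx n j" "idx n k" "i \<noteq> j" "i \<noteq> k" "j \<noteq> k"
  shows "veq n (cj (mu i k) (iw (mu i j))) (iw (mu k j) @ mu i k @ cj (mu k j) (iw (mu i j)))"
  by (rule step[OF veq.sym[OF veq.r1[of n i k j]], where p="iw (mu k j)" and q="iw (mu i j)"]) (use A in \<open>simp_all add: D\<close>)

lemma ii3: assumes A: "idx n i" "idx n j" "idx n k" "i \<noteq> j" "i \<noteq> k" "j \<noteq> k"
  shows "veq n (cj (mu i k) (ga i j)) (cj (iw (ga j k)) (ga i j) @ cj (iw (mu k j)) (ga i j) @ cj (ga k j) (ga i j) @ mu i k @ mu j k)"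
proof -
  have a: "veq n (iw (ga i j) @ iw (mu j k) @ ga i j @ mu i k @ mu j k) (cj (iw (ga j k)) (ga i j) @ cj (iw (mu k j)) (ga i j) @ cj (ga k j) (ga i j) @ mu i k @ mu j k)"
    by (rule step[OF veq.r4[of n k j], where p="iw (ga i j) @ iw (ga j k) @ iw (mu k j)" and q="iw (mu j k) @ ga i j @ mu i k @ mu j k"]) (use A in \<open>simp_all add: D\<close>)
  have b: "veq n (iw (ga i j) @ iw (mu j k) @ ga i j @ mu i k @ mu j k) (cj (mu i k) (ga i j))"
    by (rule step[OF veq.r3[of n i j k], where p="iw (ga i j) @ iw (mu j k)" and q="[]"]) (use A in \<open>simp_all add: D\<close>)
  show ?thesis using a b by (meson veq.sym veq.trans)
qed

lemma ii4: assumes A: "idx n i" "idx n j" "idx n k" "i \<noteq> j" "i \<noteq> k" "j \<noteq> k"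
  shows "veq n (cj (mu i k) (iw (ga i j))) (mu j k @ mu i k @ cj (iw (ga j k)) (iw (ga i j)) @ cj (iw (mu k j)) (iw (ga i j)) @ cj (ga k j) (iw (ga i j)))"
proof -
  have a: "veq n (mu j k @ mu i k @ ga i j @ iw (mu j k) @ iw (ga i j)) (mu j k @ mu i k @ cj (iw (ga j k)) (iw (ga i j)) @ cj (iw (mu k j)) (iw (ga i j)) @ cj (ga k j) (iw (ga i j)))"
    by (rule step[OF veq.r4[of n k j], where p="mu j k @ mu i k @ ga i j @ iw (ga j k) @ iw (mu k j)" and q="iw (mu j k) @ iw (ga i j)"]) (use A in \<open>simp_all add: D\<close>)
  have b: "veq n (cj (mu i k) (iw (ga i j))) (mu j k @ mu i k @ ga i j @ iw (mu j k) @ iw (ga i j))"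
    by (rule step[OF veq.r3[of n i j k], where p="[]" and q="iw (mu j k) @ iw (ga i j)"]) (use A in \<open>simp_all add: D\<close>)
  show ?thesis using a b by (meson veq.sym veq.trans)
qed

lemma ii5: assumes A: "idx n i" "idx n j" "idx n k" "i \<noteq> j" "i \<noteq> k" "j \<noteq> k"
  shows "veq n (cj (ga i k) (mu i j)) (cj (mu k j) (mu i j) @ ga i k @ iw (mu k j))"
  by (rule step[OF veq.r3[of n i k j], where p="iw (mu i j)" and q="iw (mu k j)"]) (use A in \<open>simp_all add: D\<close>)

lemma ii6: assumes A: "idx n i" "idx n j" "idx n k" "i \<noteq> j" "i \<noteq> k" "j \<noteq> k"
  shows "veq n (cj (ga i k) (iw (mu i j))) (iw (mu k j) @ ga i k @ cj (mu k j) (iw (mu i j)))"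
  by (rule step[OF veq.sym[OF veq.r3[of n i k j]], where p="iw (mu k j)" and q="iw (mu i j)"]) (use A in \<open>simp_all add: D\<close>)

lemma iii1: assumes A: "idx n i" "idx n j" "idx n k" "i \<noteq> j" "i \<noteq> k" "j \<noteq> k"
  shows "veq n (cj (mu k i) (mu i j)) (mu k j @ mu k i @ cj (iw (mu k j)) (mu i j))"
  by (rule step[OF veq.r1[of n k i j], where p="iw (mu i j)" and q="iw (mu i j) @ iw (mu k j) @ mu i j"]) (use A in \<open>simp_all add: D\<close>)

lemma iii2: assumes A: "idx n i" "idx n j" "idx n k" "i \<noteq> j" "i \<noteq> k" "j \<noteq> k"
  shows "veq n (cj (mu k i) (iw (mu i j))) (cj (iw (mu k j)) (iw (mu i j)) @ mu k i @ mu k j)"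
  by (rule step[OF veq.sym[OF veq.r1[of n k i j]], where p="mu i j @ iw (mu k j) @ iw (mu i j)" and q="iw (mu i j)"]) (use A in \<open>simp_all add: D\<close>)

lemma iii3: assumes A: "idx n i" "idx n j" "idx n k" "i \<noteq> j" "i \<noteq> k" "j \<noteq> k"
  shows "veq n (cj (mu k i) (ga i j)) (mu k j @ mu k i @ cj (iw (mu k j)) (ga i j))"
  by (rule step[OF veq.r2[of n k i j], where p="iw (ga i j)" and q="iw (ga i j) @ iw (mu k j) @ ga i j"]) (use A in \<open>simp_all add: D\<close>)

lemma iii4: assumes A: "idx n i" "idx n j" "idx n k" "i \<noteq> j" "i \<noteq> k" "j \<noteq> k"
  shows "veq n (cj (mu k i) (iw (ga i j))) (cj (iw (mu k j)) (iw (ga i j)) @ mu k i @ mu k j)"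
  by (rule step[OF veq.sym[OF veq.r2[of n k i j]], where p="ga i j @ iw (mu k j) @ iw (ga i j)" and q="iw (ga i j)"]) (use A in \<open>simp_all add: D\<close>)

lemma iii5: assumes A: "idx n i" "idx n j" "idx n k" "i \<noteq> j" "i \<noteq> k" "j \<noteq> k"
  shows "veq n (cj (ga k i) (mu i j)) (mu k j @ ga k i @ cj (iw (mu k j)) (mu i j))"
  by (rule step[OF veq.r3[of n k i j], where p="iw (mu i j)" and q="iw (mu i j) @ iw (mu k j) @ mu i j"]) (use A in \<open>simp_all add: D\<close>)

lemma iii6: assumes A: "idx n i" "idx n j" "idx n k" "i \<noteq> j" "i \<noteq> k" "j \<noteq> k"
  shows "veq n (cj (ga k i) (iw (mu i j))) (cj (iw (mu k j)) (iw (mu i j)) @ ga k i @ mu k j)"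
  by (rule step[OF veq.sym[OF veq.r3[of n k i j]], where p="mu i j @ iw (mu k j) @ iw (mu i j)" and q="iw (mu i j)"]) (use A in \<open>simp_all add: D\<close>)

lemma iv1: assumes A: "idx n i" "idx n j" "idx n k" "i \<noteq> j" "i \<noteq> k" "j \<noteq> k"
  shows "veq n (cj (mu j k) (mu i j)) (mu i k @ mu j k @ mu k j @ iw (mu i k) @ cj (iw (mu k j)) (mu i j))"
proof -
  have a: "veq n (mu i k @ mu j k @ mu k j @ iw (mu i k) @ cj (iw (mu k j)) (mu i j)) (mu i k @ mu j k @ iw (mu i j) @ iw (mu i k) @ mu i j)"
    by (rule step[OF veq.r1[of n i k j], where p="mu i k @ mu j k @ mu k j @ iw (mu k j @ mu i j @ mu i k)" and q="iw (mu i k @ mu i j @ mu k j) @ mu i j"]) (use A in \<open>simp_all add: D\<close>)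
  have b: "veq n (mu i k @ mu j k @ iw (mu i j) @ iw (mu i k) @ mu i j) (cj (mu j k) (mu i j))"
    by (rule step[OF veq.r1[of n i j k], where p="iw (mu i j)" and q="iw (mu i j) @ iw (mu i k) @ mu i j"]) (use A in \<open>simp_all add: D\<close>)
  show ?thesis using a b by (meson veq.sym veq.trans)
qed

lemma iv2: assumes A: "idx n i" "idx n j" "idx n k" "i \<noteq> j" "i \<noteq> k" "j \<noteq> k"
  shows "veq n (cj (mu j k) (iw (mu i j))) (cj (iw (mu k j)) (iw (mu i j)) @ iw (mu i k) @ mu k j @ mu j k @ mu i k)"
proof -
  have a: "veq n (mu i j @ iw (mu i k) @ iw (mu i j) @ mu j k @ mu i k) (cj (iw (mu k j)) (iw (mu i j)) @ iw (mu i k) @ mu k j @ mu j k @ mu i k)"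
    by (rule step[OF veq.r1[of n i k j], where p="mu i j @ iw (mu i k @ mu i j @ mu k j)" and q="iw (mu k j @ mu i j @ mu i k) @ mu k j @ mu j k @ mu i k"]) (use A in \<open>simp_all add: D\<close>)
  have b: "veq n (cj (mu j k) (iw (mu i j))) (mu i j @ iw (mu i k) @ iw (mu i j) @ mu j k @ mu i k)"
    by (rule step[OF veq.r1[of n i j k], where p="mu i j @ iw (mu i k) @ iw (mu i j)" and q="iw (mu i j)"]) (use A in \<open>simp_all add: D\<close>)
  show ?thesis using a b by (meson veq.sym veq.trans)
qed

lemma iv3: assumes A: "idx n i" "idx n j" "idx n k" "i \<noteq> j" "i \<noteq> k" "j \<noteq> k"
  shows "veq n (cj (mu j k) (ga i j)) (cj (ga j k) (ga i j) @ cj (mu k j) (ga i j) @ cj (iw (ga k j)) (ga i j))"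
  by (rule step[OF veq.r4[of n j k], where p="iw (ga i j)" and q="iw (ga k j) @ ga i j"]) (use A in \<open>simp_all add: D\<close>)

lemma iv4: assumes A: "idx n i" "idx n j" "idx n k" "i \<noteq> j" "i \<noteq> k" "j \<noteq> k"
  shows "veq n (cj (mu j k) (iw (ga i j))) (cj (ga j k) (iw (ga i j)) @ cj (mu k j) (iw (ga i j)) @ cj (iw (ga k j)) (iw (ga i j)))"
  by (rule step[OF veq.r4[of n j k], where p="ga i j" and q="iw (ga k j) @ iw (ga i j)"]) (use A in \<open>simp_all add: D\<close>)

lemma iv5: assumes A: "idx n i" "idx n j" "idx n k" "i \<noteq> j" "i \<noteq> k" "j \<noteq> k"
  shows "veq n (cj (ga j k) (mu i j)) (mu i k @ ga j k @ mu k j @ iw (mu i k) @ cj (iw (mu k j)) (mu i j))"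
proof -
  have a: "veq n (mu i k @ ga j k @ mu k j @ iw (mu i k) @ cj (iw (mu k j)) (mu i j)) (mu i k @ ga j k @ iw (mu i j) @ iw (mu i k) @ mu i j)"
    by (rule step[OF veq.r1[of n i k j], where p="mu i k @ ga j k @ mu k j @ iw (mu k j @ mu i j @ mu i k)" and q="iw (mu i k @ mu i j @ mu k j) @ mu i j"]) (use A in \<open>simp_all add: D\<close>)
  have b: "veq n (mu i k @ ga j k @ iw (mu i j) @ iw (mu i k) @ mu i j) (cj (ga j k) (mu i j))"
    by (rule step[OF veq.r2[of n i j k], where p="iw (mu i j)" and q="iw (mu i j) @ iw (mu i k) @ mu i j"]) (use A in \<open>simp_all add: D\<close>)
  show ?thesis using a b by (meson veq.sym veq.trans)
qed

lemma iv6: assumes A: "idx n i" "idx n j" "idx n k" "i \<noteq> j" "i \<noteq> k" "j \<noteq> k"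
  shows "veq n (cj (ga j k) (iw (mu i j))) (cj (iw (mu k j)) (iw (mu i j)) @ iw (mu i k) @ mu k j @ ga j k @ mu i k)"
proof -
  have a: "veq n (mu i j @ iw (mu i k) @ iw (mu i j) @ ga j k @ mu i k) (cj (iw (mu k j)) (iw (mu i j)) @ iw (mu i k) @ mu k j @ ga j k @ mu i k)"
    by (rule step[OF veq.r1[of n i k j], where p="mu i j @ iw (mu i k @ mu i j @ mu k j)" and q="iw (mu k j @ mu i j @ mu i k) @ mu k j @ ga j k @ mu i k"]) (use A in \<open>simp_all add: D\<close>)
  have b: "veq n (cj (ga j k) (iw (mu i j))) (mu i j @ iw (mu i k) @ iw (mu i j) @ ga j k @ mu i k)"
    by (rule step[OF veq.r2[of n i j k], where p="mu i j @ iw (mu i k) @ iw (mu i j)" and q="iw (mu i j)"]) (use A in \<open>simp_all add: D\<close>)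
  show ?thesis using a b by (meson veq.sym veq.trans)
qed

lemma v1: assumes A: "idx n i" "idx n j" "idx n k" "i \<noteq> j" "i \<noteq> k" "j \<noteq> k"
  shows "veq n (cj (ga k j) (mu i j)) (cj (mu k j) (mu i j) @ mu i k @ iw (mu k j) @ ga k j @ iw (mu i k))"
proof -
  have a: "veq n (iw (mu i j) @ mu i k @ mu i j @ ga k j @ iw (mu i k)) (cj (mu k j) (mu i j) @ mu i k @ iw (mu k j) @ ga k j @ iw (mu i k))"
    by (rule step[OF veq.r1[of n i k j], where p="iw (mu i j)" and q="iw (mu k j) @ ga k j @ iw (mu i k)"]) (use A in \<open>simp_all add: D\<close>)
  have b: "veq n (iw (mu i j) @ mu i k @ mu i j @ ga k j @ iw (mu i k)) (cj (ga k j) (mu i j))"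
    by (rule step[OF veq.r2[of n i k j], where p="iw (mu i j)" and q="iw (mu i k)"]) (use A in \<open>simp_all add: D\<close>)
  show ?thesis using a b by (meson veq.sym veq.trans)
qed

lemma v2: assumes A: "idx n i" "idx n j" "idx n k" "i \<noteq> j" "i \<noteq> k" "j \<noteq> k"
  shows "veq n (cj (ga k j) (iw (mu i j))) (iw (mu i k) @ ga k j @ iw (mu k j) @ mu i k @ cj (mu k j) (iw (mu i j)))"
proof -
  have a: "veq n (iw (mu i k) @ ga k j @ iw (mu k j) @ mu i k @ cj (mu k j) (iw (mu i j))) (iw (mu i k) @ ga k j @ mu i j @ mu i k @ iw (mu i j))"
    by (rule step[OF veq.r1[of n i k j], where p="iw (mu i k) @ ga k j @ iw (mu k j)" and q="iw (mu i j)"]) (use A in \<open>simp_all add: D\<close>)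
  have b: "veq n (cj (ga k j) (iw (mu i j))) (iw (mu i k) @ ga k j @ mu i j @ mu i k @ iw (mu i j))"
    by (rule step[OF veq.r2[of n i k j], where p="iw (mu i k)" and q="iw (mu i j)"]) (use A in \<open>simp_all add: D\<close>)
  show ?thesis using a b by (meson veq.sym veq.trans)
qed

theorem mainTheorem8:
  fixes n i j k l :: nat
  shows
  "(idx n i \<and> idx n j \<and> idx n k \<and> idx n l \<and> distinct [i, j, k, l] \<and> max i j < max k l \<longrightarrow>
     (\<forall>\<alpha>\<in>{mu k l, ga k l}. \<forall>\<beta>\<in>{mu i j, ga i j}.
        veq n (cj \<alpha> \<beta>) \<alpha> \<and> veq n (cj \<alpha> (iw \<beta>)) \<alpha>))
   \<and>
   (idx n i \<and> idx n j \<and> idx n k \<and> distinct [i, j, k] \<and> max i j < k \<longrightarrow>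
     \<comment> \<open>(ii)\<close>
     veq n (cj (mu i k) (mu i j)) (cj (mu k j) (mu i j) @ mu i k @ iw (mu k j)) \<and>
     veq n (cj (mu i k) (iw (mu i j))) (iw (mu k j) @ mu i k @ cj (mu k j) (iw (mu i j))) \<and>
     veq n (cj (mu i k) (ga i j))
       (cj (iw (ga j k)) (ga i j) @ cj (iw (mu k j)) (ga i j) @ cj (ga k j) (ga i j) @ mu i k @ mu j k) \<and>
     veq n (cj (mu i k) (iw (ga i j)))
       (mu j k @ mu i k @ cj (iw (ga j k)) (iw (ga i j)) @ cj (iw (mu k j)) (iw (ga i j)) @ cj (ga k j) (iw (ga i j))) \<and>
     veq n (cj (ga i k) (mu i j)) (cj (mu k j) (mu i j) @ ga i k @ iw (mu k j)) \<and>
     veq n (cj (ga i k) (iw (mu i j))) (iw (mu k j) @ ga i k @ cj (mu k j) (iw (mu i j))) \<and>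
     \<comment> \<open>(iii)\<close>
     veq n (cj (mu k i) (mu i j)) (mu k j @ mu k i @ cj (iw (mu k j)) (mu i j)) \<and>
     veq n (cj (mu k i) (iw (mu i j))) (cj (iw (mu k j)) (iw (mu i j)) @ mu k i @ mu k j) \<and>
     veq n (cj (mu k i) (ga i j)) (mu k j @ mu k i @ cj (iw (mu k j)) (ga i j)) \<and>
     veq n (cj (mu k i) (iw (ga i j))) (cj (iw (mu k j)) (iw (ga i j)) @ mu k i @ mu k j) \<and>
     veq n (cj (ga k i) (mu i j)) (mu k j @ ga k i @ cj (iw (mu k j)) (mu i j)) \<and>
     veq n (cj (ga k i) (iw (mu i j))) (cj (iw (mu k j)) (iw (mu i j)) @ ga k i @ mu k j) \<and>
     \<comment> \<open>(iv)\<close>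
     veq n (cj (mu j k) (mu i j))
       (mu i k @ mu j k @ mu k j @ iw (mu i k) @ cj (iw (mu k j)) (mu i j)) \<and>
     veq n (cj (mu j k) (iw (mu i j)))
       (cj (iw (mu k j)) (iw (mu i j)) @ iw (mu i k) @ mu k j @ mu j k @ mu i k) \<and>
     veq n (cj (mu j k) (ga i j))
       (cj (ga j k) (ga i j) @ cj (mu k j) (ga i j) @ cj (iw (ga k j)) (ga i j)) \<and>
     veq n (cj (mu j k) (iw (ga i j)))
       (cj (ga j k) (iw (ga i j)) @ cj (mu k j) (iw (ga i j)) @ cj (iw (ga k j)) (iw (ga i j))) \<and>
     veq n (cj (ga j k) (mu i j))
       (mu i k @ ga j k @ mu k j @ iw (mu i k) @ cj (iw (mu k j)) (mu i j)) \<and>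
     veq n (cj (ga j k) (iw (mu i j)))
       (cj (iw (mu k j)) (iw (mu i j)) @ iw (mu i k) @ mu k j @ ga j k @ mu i k) \<and>
     \<comment> \<open>(v)\<close>
     veq n (cj (ga k j) (mu i j))
       (cj (mu k j) (mu i j) @ mu i k @ iw (mu k j) @ ga k j @ iw (mu i k)) \<and>
     veq n (cj (ga k j) (iw (mu i j)))
       (iw (mu i k) @ ga k j @ iw (mu k j) @ mu i k @ cj (mu k j) (iw (mu i j))))"
  apply (rule conjI)
  subgoal
  proof
    assume H: "idx n i \<and> idx n j \<and> idx n k \<and> idx n l \<and> distinct [i, j, k, l] \<and> max i j < max k l"
    then have c1: "veq n (mu i j @ mu k l) (mu k l @ mu i j)"
      and c2: "veq n (ga i j @ ga k l) (ga k l @ ga i j)"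
      and c3: "veq n (mu i j @ ga k l) (ga k l @ mu i j)"
      and c4: "veq n (ga i j @ mu k l) (mu k l @ ga i j)"
      by (auto intro: veq.r5 veq.r6 veq.r7 veq.sym[OF veq.r7])
    show "\<forall>\<alpha>\<in>{mu k l, ga k l}. \<forall>\<beta>\<in>{mu i j, ga i j}.
          veq n (cj \<alpha> \<beta>) \<alpha> \<and> veq n (cj \<alpha> (iw \<beta>)) \<alpha>"
      using commute[OF c1] commute[OF c2] commute[OF c3] commute[OF c4] by blast
  qed
  apply (rule impI)
  apply (elim conjE)
  apply (intro conjI)
  by (rule ii1 ii2 ii3 ii4 ii5 ii6 iii1 iii2 iii3 iii4 iii5 iii6 iv1 iv2 iv3 iv4 iv5 iv6 v1 v2; simp)+

end
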